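(* Let $f,g\colon\mathbb{R}^3\to\mathbb{R}$ be continuous (globally Lipschitz) with $|f(x,y,z)|,|g(x,y,z)|<M$ everywhere, let $\varepsilon>0$, and consider solutions $(x(t),y(t),z(t))$ of \[ \dot x = f(x,y,z),\qquad \dot y = g(x,y,z),\qquad \varepsilon\dot z = x+|z|. \] Then the sets $\{z>-x+M\varepsilon\}$ and $\{z>x-M\varepsilon\}$ are forward invariant: once a trajectory enters one of them, it stays in it for all later times. In particular, if a solution satisfies $x(\tau)<0$ and $z(\tau)=0$, then $z(t)>x(t)-M\varepsilon$ for all $t\ge\tau$, and if moreover $z(t_0)>-x(t_0)+M\varepsilon$ for some $t_0\ge\tau$, then $z(t)>0$ for all $t\ge t_0$. *)

theory Defs
  imports "HOL-Analysis.Analysis"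
begin

end

theory Submission
  imports Defs
begin

lemma inv_lemma:
  fixes u u' :: "real \<Rightarrow> real" and I :: "real set"
  assumes I: "is_interval I"
    and der: "\<And>t. t \<in> I \<Longrightarrow> (u has_real_derivative u' t) (at t within I)"
    and bnd: "\<And>t. t \<in> I \<Longrightarrow> u t = 0 \<Longrightarrow> u' t > 0"
    and t1: "t1 \<in> I" and t2: "t2 \<in> I" and le: "t1 \<le> t2" and pos: "u t1 > 0"
  shows "u t2 > 0"
proof (rule ccontr)
  assume neg: "\<not> u t2 > 0"
  have sub: "{t1..t2} \<subseteq> I" using mem_is_interval_1_I[OF I t1 t2] by auto
  have cI: "continuous_on I u" by (rule DERIV_continuous_on[OF der])
  have c: "continuous_on {t1..t2} u" using continuous_on_subset[OF cI sub] .
  define S where "S = {t1..t2} \<inter> u -` {..0}"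
  have clS: "closed S" unfolding S_def by (rule continuous_closed_preimage[OF c]) auto
  have neS: "S \<noteq> {}" using neg le unfolding S_def by auto
  have bS: "bdd_below S" unfolding S_def by (rule bdd_belowI[of _ t1]) auto
  define s where "s = Inf S"
  have sS: "s \<in> S" unfolding s_def using closed_contains_Inf[OF neS bS clS] .
  have lowS: "\<And>r. r \<in> S \<Longrightarrow> s \<le> r" unfolding s_def using bS by (simp add: cInf_lower)
  have s1: "t1 \<le> s" "s \<le> t2" "u s \<le> 0" using sS unfolding S_def by auto
  have st1: "t1 < s" using s1 pos by (cases "t1 = s") auto
  have c2: "continuous_on {t1..s} u" using continuous_on_subset[OF c] s1 by auto
  obtain r where r: "t1 \<le> r" "r \<le> s" "u r = 0"
    using IVT2'[of u s 0 t1, OF s1(3) _ _ c2] pos st1 by auto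
  have "r \<in> S" using r s1 unfolding S_def by auto
  hence "r = s" using lowS r by force
  hence us: "u s = 0" using r by simp
  have sI: "s \<in> I" using sub s1 by auto
  obtain d where d: "d > 0" "\<And>h. h > 0 \<Longrightarrow> s - h \<in> I \<Longrightarrow> h < d \<Longrightarrow> u (s - h) < u s"
    using has_real_derivative_pos_inc_left[OF der[OF sI] bnd[OF sI us]] by blast
  define h where "h = min (d/2) ((s - t1)/2)"
  have h0: "h > 0" "h < d" "h \<le> (s - t1)/2" using d st1 unfolding h_def by (auto simp del: min_less_iff_conj simp add: min_def)
  have h: "h > 0" "h < d" "s - h \<in> {t1..t2}" using h0 st1 s1 by auto
  have "u (s - h) < 0" using d(2)[OF h(1) _ h(2)] h(3) sub us by auto
  hence "s - h \<in> S" using h(3) unfolding S_def by auto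
  hence "s \<le> s - h" by (rule lowS)
  thus False using h by simp
qed

theorem proposition1:
  fixes f g :: "real \<times> real \<times> real \<Rightarrow> real"
    and M \<epsilon> :: real
    and x y z :: "real \<Rightarrow> real"
    and I :: "real set"
  assumes f_cont: "continuous_on UNIV f" and g_cont: "continuous_on UNIV g"
    and f_lip: "\<exists>L. L-lipschitz_on UNIV f" and g_lip: "\<exists>L. L-lipschitz_on UNIV g"
    and f_bd: "\<And>p. \<bar>f p\<bar> < M" and g_bd: "\<And>p. \<bar>g p\<bar> < M"
    and eps: "\<epsilon> > 0"
    and I: "is_interval I"
    and x_ode: "\<And>t. t \<in> I \<Longrightarrow> (x has_real_derivative f (x t, y t, z t)) (at t within I)"
    and y_ode: "\<And>t. t \<in> I \<Longrightarrow> (y has_real_derivative g (x t, y t, z t)) (at t within I)"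
    and z_ode: "\<And>t. t \<in> I \<Longrightarrow> (z has_real_derivative (x t + \<bar>z t\<bar>) / \<epsilon>) (at t within I)"
  shows "(\<forall>t1\<in>I. \<forall>t2\<in>I. t1 \<le> t2 \<longrightarrow> z t1 > - x t1 + M * \<epsilon> \<longrightarrow> z t2 > - x t2 + M * \<epsilon>)
       \<and> (\<forall>t1\<in>I. \<forall>t2\<in>I. t1 \<le> t2 \<longrightarrow> z t1 > x t1 - M * \<epsilon> \<longrightarrow> z t2 > x t2 - M * \<epsilon>)
       \<and> (\<forall>\<tau>\<in>I. x \<tau> < 0 \<and> z \<tau> = 0 \<longrightarrow>
            (\<forall>t\<in>I. t \<ge> \<tau> \<longrightarrow> z t > x t - M * \<epsilon>)
          \<and> (\<forall>t0\<in>I. t0 \<ge> \<tau> \<and> z t0 > - x t0 + M * \<epsilon> \<longrightarrow> (\<forall>t\<in>I. t \<ge> t0 \<longrightarrow> z t > 0)))"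
proof -
  have Mpos: "M > 0" using f_bd[of "(0,0,0)"] abs_ge_zero[of "f (0,0,0)"] by linarith
  have P1: "z t2 > - x t2 + M * \<epsilon>" if "t1 \<in> I" "t2 \<in> I" "t1 \<le> t2" "z t1 > - x t1 + M * \<epsilon>" for t1 t2
  proof -
    have "(\<lambda>t. z t + x t - M * \<epsilon>) t2 > 0"
    proof (rule inv_lemma[OF I _ _ that(1,2,3)])
      show "((\<lambda>t. z t + x t - M * \<epsilon>) has_real_derivative ((x t + \<bar>z t\<bar>) / \<epsilon> + f (x t, y t, z t))) (at t within I)"
        if "t \<in> I" for t
        using DERIV_diff[OF DERIV_add[OF z_ode[OF that] x_ode[OF that]] DERIV_const] by simp
      show "(x t + \<bar>z t\<bar>) / \<epsilon> + f (x t, y t, z t) > 0" if "t \<in> I" "z t + x t - M * \<epsilon> = 0" for t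
      proof -
        have "x t + \<bar>z t\<bar> \<ge> M * \<epsilon>" using that(2) by linarith
        hence "(x t + \<bar>z t\<bar>) / \<epsilon> \<ge> M" using eps by (simp add: field_simps)
        thus ?thesis using f_bd[of "(x t, y t, z t)"] by linarith
      qed
      show "z t1 + x t1 - M * \<epsilon> > 0" using that(4) by linarith
    qed
    thus ?thesis by simp
  qed
  have P2: "z t2 > x t2 - M * \<epsilon>" if "t1 \<in> I" "t2 \<in> I" "t1 \<le> t2" "z t1 > x t1 - M * \<epsilon>" for t1 t2
  proof -
    have "(\<lambda>t. z t - x t + M * \<epsilon>) t2 > 0"
    proof (rule inv_lemma[OF I _ _ that(1,2,3)])
      show "((\<lambda>t. z t - x t + M * \<epsilon>) has_real_derivative ((x t + \<bar>z t\<bar>) / \<epsilon> - f (x t, y t, z t))) (at t within I)"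
        if "t \<in> I" for t
        using DERIV_add[OF DERIV_diff[OF z_ode[OF that] x_ode[OF that]] DERIV_const] by simp
      show "(x t + \<bar>z t\<bar>) / \<epsilon> - f (x t, y t, z t) > 0" if "t \<in> I" "z t - x t + M * \<epsilon> = 0" for t
      proof -
        have "x t + \<bar>z t\<bar> \<ge> M * \<epsilon>" using that(2) by linarith
        hence "(x t + \<bar>z t\<bar>) / \<epsilon> \<ge> M" using eps by (simp add: field_simps)
        thus ?thesis using f_bd[of "(x t, y t, z t)"] by linarith
      qed
      show "z t1 - x t1 + M * \<epsilon> > 0" using that(4) by linarith
    qed
    thus ?thesis by simp
  qed
  have P3: "(\<forall>t\<in>I. t \<ge> \<tau> \<longrightarrow> z t > x t - M * \<epsilon>)
          \<and> (\<forall>t0\<in>I. t0 \<ge> \<tau> \<and> z t0 > - x t0 + M * \<epsilon> \<longrightarrow> (\<forall>t\<in>I. t \<ge> t0 \<longrightarrow> z t > 0))"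
    if "\<tau> \<in> I" "x \<tau> < 0" "z \<tau> = 0" for \<tau>
  proof -
    have st: "z \<tau> > x \<tau> - M * \<epsilon>" using that(2,3) mult_pos_pos[OF Mpos eps] by linarith
    have A: "\<forall>t\<in>I. t \<ge> \<tau> \<longrightarrow> z t > x t - M * \<epsilon>" using P2[OF that(1) _ _ st] by auto
    show ?thesis
    proof (intro conjI A ballI impI allI)
      fix t0 t assume t0: "t0 \<in> I" "t0 \<ge> \<tau> \<and> z t0 > - x t0 + M * \<epsilon>" and t: "t \<in> I" "t \<ge> t0"
      have "z t > - x t + M * \<epsilon>" using P1[OF t0(1) t(1) t(2)] t0 by auto
      moreover have "z t > x t - M * \<epsilon>" using A t t0 by auto
      ultimately show "z t > 0" by linarith
    qed
  qed
  show ?thesis using P1 P2 P3 by blast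
qed

end
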